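(* Let $(\mathcal{X},d)$ be a complete, separable, non-compact, locally compact, non-branching length space and $p>1$. Let $(\mu_t)_{t\ge0}$ and $(\nu_t)_{t\ge0}$ be two unit-speed rays in $P_p(\mathcal{X})$. If there exists a sequence $\{t_n\}$ of positive numbers tending to $0$ such that for each $n$ the ray $(\nu_{t+t_n})_{t\ge0}$ is the unique co-ray from $\nu_{t_n}$ to $(\mu_t)_{t\ge0}$, then $(\nu_t)_{t\ge0}$ is a co-ray from $\nu_0$ to $(\mu_t)_{t\ge0}$.
   Context: $P_p(\mathcal{X})$: Borel probability measures on $\mathcal{X}$ with finite $p$-th moment, with $W_p(\mu,\nu)=\big(\min_{\pi}\int d(x,y)^p\,d\pi\big)^{1/p}$ over couplings $\pi$ of $\mu,\nu$. A ray in a metric space $(\mathcal{Y},d)$ is a continuous $\gamma:[0,\infty)\to\mathcal{Y}$ with $d(\gamma_s,\gamma_t)=|s-t|\,d(\gamma_0,\gamma_1)$; unit-speed means $d(\gamma_0,\gamma_1)=1$. A geodesic $\zeta:[a,b]\to\mathcal{Y}$ satisfies $d(\zeta_s,\zeta_t)=\frac{|t-s|}{b-a}d(\zeta_a,\zeta_b)$. $\mathcal{X}$ is non-branching if every geodesic $\zeta:[a,b]\to\mathcal{X}$ is uniquely determined by its restriction to any nontrivial subinterval. $T(\mu,\nu)$ ($L=W_p(\mu,\nu)$) is the set of curves $(\mu_t)_{0\le t\le L}$ in $P_p(\mathcal{X})$ with $\mu_0=\mu$, $\mu_L=\nu$, $W_p(\mu_s,\mu_t)=|s-t|$. Co-ray: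 a ray $(\lambda_t)_{t\ge0}$ in $P_p(\mathcal{X})$ is a co-ray from $\lambda_0$ to the unit-speed ray $(\mu_t)_{t\ge0}$ if there exist $s_n\to+\infty$, $\lambda_0^n\in P_p(\mathcal{X})$ with $W_p(\lambda_0^n,\lambda_0)\to0$, and $(\lambda^n_t)_{0\le t\le L_n}\in T(\lambda_0^n,\mu_{s_n})$, $L_n=W_p(\lambda_0^n,\mu_{s_n})$, with $W_p(\lambda_t^n,\lambda_t)\to0$ for every $t\ge0$. *)

theory Defs
  imports "HOL-Analysis.Analysis" "HOL-Probability.Probability"
begin

definition curve_length :: "(real \<Rightarrow> 'a::metric_space) \<Rightarrow> real \<Rightarrow> real \<Rightarrow> ereal" where
  "curve_length g a b =
     (SUP ts \<in> {ts. sorted ts \<and> set ts \<subseteq> {a..b}}.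
        ereal (\<Sum>i<length ts - 1. dist (g (ts ! i)) (g (ts ! Suc i))))"

definition length_space :: "'a::metric_space itself \<Rightarrow> bool" where
  "length_space _ \<longleftrightarrow>
     (\<forall>x y::'a. ereal (dist x y) =
        (INF g \<in> {g. continuous_on {0..1} g \<and> g 0 = x \<and> g 1 = y}. curve_length g 0 1))"

definition is_geodesic :: "(real \<Rightarrow> 'a::metric_space) \<Rightarrow> real \<Rightarrow> real \<Rightarrow> bool" where
  "is_geodesic z a b \<longleftrightarrow> a < b \<and>
     (\<forall>s\<in>{a..b}. \<forall>t\<in>{a..b}. dist (z s) (z t) = \<bar>t - s\<bar> / (b - a) * dist (z a) (z b))"

definition non_branching :: "'a::metric_space itself \<Rightarrow> bool" where
  "non_branching _ \<longleftrightarrow>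
     (\<forall>(z::real \<Rightarrow> 'a) z' a b c e. is_geodesic z a b \<and> is_geodesic z' a b \<and>
        a \<le> c \<and> c < e \<and> e \<le> b \<and> (\<forall>t\<in>{c..e}. z t = z' t)
        \<longrightarrow> (\<forall>t\<in>{a..b}. z t = z' t))"

definition Pp :: "real \<Rightarrow> 'a::metric_space measure set" where
  "Pp p = {m. prob_space m \<and> sets m = sets borel \<and>
              (\<exists>x0. (\<integral>\<^sup>+ x. ennreal (dist x0 x powr p) \<partial>m) < \<infinity>)}"

definition couplings :: "'a::metric_space measure \<Rightarrow> 'a measure \<Rightarrow> ('a \<times> 'a) measure set" where
  "couplings m n = {pi. prob_space pi \<and> sets pi = sets (borel \<Otimes>\<^sub>M borel) \<and>
                        distr pi borel fst = m \<and> distr pi borel snd = n}"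

definition Wp :: "real \<Rightarrow> 'a::metric_space measure \<Rightarrow> 'a measure \<Rightarrow> real" where
  "Wp p m n = enn2real (INF pi \<in> couplings m n. \<integral>\<^sup>+ xy. ennreal (dist (fst xy) (snd xy) powr p) \<partial>pi)
              powr (1 / p)"

definition is_ray :: "real \<Rightarrow> (real \<Rightarrow> 'a::metric_space measure) \<Rightarrow> bool" where
  "is_ray p l \<longleftrightarrow> (\<forall>t\<ge>0. l t \<in> Pp p) \<and>
     (\<forall>s\<ge>0. \<forall>t\<ge>0. Wp p (l s) (l t) = \<bar>s - t\<bar> * Wp p (l 0) (l 1))"

definition unit_ray :: "real \<Rightarrow> (real \<Rightarrow> 'a::metric_space measure) \<Rightarrow> bool" where
  "unit_ray p l \<longleftrightarrow> is_ray p l \<and> Wp p (l 0) (l 1) = 1"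

definition Tgeod :: "real \<Rightarrow> 'a::metric_space measure \<Rightarrow> 'a measure \<Rightarrow> (real \<Rightarrow> 'a measure) set" where
  "Tgeod p m n = {c. (\<forall>t\<in>{0..Wp p m n}. c t \<in> Pp p) \<and> c 0 = m \<and> c (Wp p m n) = n \<and>
      (\<forall>s\<in>{0..Wp p m n}. \<forall>t\<in>{0..Wp p m n}. Wp p (c s) (c t) = \<bar>s - t\<bar>)}"

definition co_ray :: "real \<Rightarrow> (real \<Rightarrow> 'a::metric_space measure) \<Rightarrow> (real \<Rightarrow> 'a measure) \<Rightarrow> bool" where
  "co_ray p l mu \<longleftrightarrow> is_ray p l \<and>
     (\<exists>(s::nat \<Rightarrow> real) (l0::nat \<Rightarrow> 'a measure) (ln::nat \<Rightarrow> real \<Rightarrow> 'a measure).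
        filterlim s at_top sequentially \<and>
        (\<forall>n. l0 n \<in> Pp p) \<and>
        (\<lambda>n. Wp p (l0 n) (l 0)) \<longlonglongrightarrow> 0 \<and>
        (\<forall>n. ln n \<in> Tgeod p (l0 n) (mu (s n))) \<and>
        (\<forall>t\<ge>0. (\<lambda>n. Wp p (ln n t) (l t)) \<longlonglongrightarrow> 0))"

end

theory Submission
  imports Defs
begin

lemma powr_ge1_aux:
  fixes l p :: real
  assumes "p \<ge> 1" "0 < l" "l \<le> 1"
  shows "l powr (1 - p) \<ge> 1"
proof -
  have "l powr (p - 1) \<le> 1" using assms by (intro powr_le1) auto
  moreover have "l powr (p - 1) > 0" using assms by simp
  moreover have "l powr (1 - p) = inverse (l powr (p - 1))"
    using assms by (simp add: powr_minus[symmetric])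
  ultimately show ?thesis by (simp add: one_le_inverse)
qed

lemma scale_powr_aux:
  fixes a l p :: real
  assumes "0 < l" "0 \<le> a"
  shows "l * (a / l) powr p = l powr (1 - p) * a powr p"
  using assms by (simp add: powr_divide powr_diff)

lemma conv2:
  fixes a b l p :: real
  assumes p: "p \<ge> 1" and a: "a \<ge> 0" and b: "b \<ge> 0" and l: "0 < l" "l < 1"
  shows "(a + b) powr p \<le> l powr (1 - p) * a powr p + (1 - l) powr (1 - p) * b powr p"
proof (cases "a = 0 \<or> b = 0")
  case True
  have g1: "l powr (1 - p) \<ge> 1" "(1 - l) powr (1 - p) \<ge> 1"
    using p l by (auto intro!: powr_ge1_aux)
  have pn: "p \<noteq> 0" using p by auto
  show ?thesis
  proof (cases "a = 0")
    case True
    have "b powr p \<le> (1 - l) powr (1 - p) * b powr p"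
      using g1(2) by (simp add: mult_le_cancel_right1)
    then show ?thesis using True pn by simp
  next
    case False
    then have "b = 0" using \<open>a = 0 \<or> b = 0\<close> by auto
    have "a powr p \<le> l powr (1 - p) * a powr p"
      using g1(1) by (simp add: mult_le_cancel_right1)
    then show ?thesis using \<open>b = 0\<close> pn by simp
  qed
next
  case False
  then have a': "a > 0" and b': "b > 0" using a b by auto
  have cv: "convex_on {0<..} (\<lambda>x::real. x powr p)" using p by (rule powr_convex)
  have "(\<lambda>x::real. x powr p) ((1 - (1 - l)) *\<^sub>R (a / l) + (1 - l) *\<^sub>R (b / (1 - l)))
        \<le> (1 - (1 - l)) * (a / l) powr p + (1 - l) * (b / (1 - l)) powr p"
    by (rule convex_onD[OF cv]) (use l a' b' in auto)
  moreover have "(1 - (1 - l)) *\<^sub>R (a / l) + (1 - l) *\<^sub>R (b / (1 - l)) = a + b"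
    using l by simp
  ultimately have "(a + b) powr p \<le> l * (a / l) powr p + (1 - l) * (b / (1 - l)) powr p"
    by simp
  also have "\<dots> = l powr (1 - p) * a powr p + (1 - l) powr (1 - p) * b powr p"
    using l a b by (simp add: scale_powr_aux)
  finally show ?thesis .
qed

lemma conv3:
  fixes a b c l1 l2 l3 p :: real
  assumes p: "p \<ge> 1" and abc: "a \<ge> 0" "b \<ge> 0" "c \<ge> 0"
    and l: "0 < l1" "0 < l2" "0 < l3" "l1 + l2 + l3 = 1"
  shows "(a + b + c) powr p \<le> l1 powr (1 - p) * a powr p + l2 powr (1 - p) * b powr p
           + l3 powr (1 - p) * c powr p"
proof -
  define s where "s = l2 + l3"
  have s: "0 < s" "1 - l1 = s" using l by (auto simp: s_def)
  have bc: "(b + c) powr p \<le> (l2 / s) powr (1 - p) * b powr p + (1 - l2 / s) powr (1 - p) * c powr p"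
    using l abc p s by (intro conv2) (auto simp: s_def field_simps)
  have m: "(1 - l1) powr (1 - p) * (b + c) powr p \<le>
      s powr (1 - p) * ((l2 / s) powr (1 - p) * b powr p + (1 - l2 / s) powr (1 - p) * c powr p)"
    unfolding s(2) using bc by (intro mult_left_mono) auto
  have e1: "1 - l2 / s = l3 / s" using s by (simp add: s_def field_simps)
  have e2: "s powr (1 - p) * ((l2 / s) powr (1 - p) * b powr p + (l3 / s) powr (1 - p) * c powr p)
      = l2 powr (1 - p) * b powr p + l3 powr (1 - p) * c powr p"
    using s l by (simp add: powr_divide field_simps)
  have "(a + b + c) powr p = (a + (b + c)) powr p" by (simp add: add.assoc)
  also have "\<dots> \<le> l1 powr (1 - p) * a powr p + (1 - l1) powr (1 - p) * (b + c) powr p"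
    using l abc p by (intro conv2) auto
  also have "\<dots> \<le> l1 powr (1 - p) * a powr p + (l2 powr (1 - p) * b powr p + l3 powr (1 - p) * c powr p)"
    using m unfolding e1 e2 by simp
  finally show ?thesis by simp
qed

lemma sep_seq:
  assumes "separable_space (euclidean :: 'a::metric_space topology)"
  shows "\<exists>q :: nat \<Rightarrow> 'a. \<forall>x e. e > 0 \<longrightarrow> (\<exists>i. dist (q i) x < e)"
proof -
  from assms obtain C :: "'a set" where C: "countable C" "closure C = UNIV"
    unfolding separable_space_def by (auto simp: euclidean_closure_of)
  have ne: "C \<noteq> {}" using C(2) by auto
  have rq: "range (from_nat_into C) = C" using range_from_nat_into[OF ne C(1)] .
  have "\<exists>i. dist (from_nat_into C i) x < e" if epos: "e > 0" for x :: 'a and e :: real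
  proof -
    have "x \<in> closure C" using C(2) by auto
    then obtain y where "y \<in> C" "dist y x < e" using epos closure_approachable by blast
    then show ?thesis using rq by (metis imageE)
  qed
  then show ?thesis by blast
qed

lemma meas_dist1[measurable]: "(\<lambda>x::'a::metric_space. dist x c) \<in> borel_measurable borel"
  by (intro borel_measurable_continuous_onI continuous_intros)

lemma meas_dist2[measurable]: "(\<lambda>x::'a::metric_space. dist c x) \<in> borel_measurable borel"
  by (intro borel_measurable_continuous_onI continuous_intros)

lemma dist_meas:
  assumes "separable_space (euclidean :: 'a::metric_space topology)"
  shows "(\<lambda>\<omega>::'a \<times> 'a. dist (fst \<omega>) (snd \<omega>)) \<in> borel_measurable (borel \<Otimes>\<^sub>M borel)"
proof -
  obtain q :: "nat \<Rightarrow> 'a" where q: "\<And>x e. e > 0 \<Longrightarrow> \<exists>i. dist (q i) x < e"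
    using sep_seq[OF assms] by metis
  define g where "g \<omega> = (INF i. ennreal (dist (fst \<omega>) (q i) + dist (q i) (snd \<omega>)))" for \<omega> :: "'a \<times> 'a"
  have gm: "g \<in> borel_measurable (borel \<Otimes>\<^sub>M borel)"
    unfolding g_def by measurable
  have geq: "g \<omega> = ennreal (dist (fst \<omega>) (snd \<omega>))" for \<omega>
  proof (rule antisym)
    show "ennreal (dist (fst \<omega>) (snd \<omega>)) \<le> g \<omega>"
      unfolding g_def by (intro INF_greatest ennreal_leI dist_triangle)
    show "g \<omega> \<le> ennreal (dist (fst \<omega>) (snd \<omega>))"
    proof (rule ennreal_le_epsilon)
      fix e :: real assume "0 < e"
      then obtain i where i: "dist (q i) (fst \<omega>) < e / 2" using q[of "e/2"] by auto
      have "g \<omega> \<le> ennreal (dist (fst \<omega>) (q i) + dist (q i) (snd \<omega>))"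
        unfolding g_def by (rule INF_lower) simp
      also have "dist (q i) (snd \<omega>) \<le> dist (q i) (fst \<omega>) + dist (fst \<omega>) (snd \<omega>)"
        by (rule dist_triangle)
      then have "dist (fst \<omega>) (q i) + dist (q i) (snd \<omega>) \<le> dist (fst \<omega>) (snd \<omega>) + e"
        using i by (simp add: dist_commute)
      then have "ennreal (dist (fst \<omega>) (q i) + dist (q i) (snd \<omega>)) \<le> ennreal (dist (fst \<omega>) (snd \<omega>)) + ennreal e"
        using \<open>0 < e\<close> by (simp add: ennreal_plus[symmetric] del: ennreal_plus)
      finally show "g \<omega> \<le> ennreal (dist (fst \<omega>) (snd \<omega>)) + ennreal e" .
    qed
  qed
  have "(\<lambda>\<omega>. enn2real (g \<omega>)) \<in> borel_measurable (borel \<Otimes>\<^sub>M borel)"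
    using gm by measurable
  then show ?thesis by (simp add: geq)
qed


lemma aux_w:
  fixes X :: ennreal and w :: real
  assumes "X \<le> \<top> * ennreal w" "w \<ge> 0"
  shows "ennreal (1 / w) * ennreal w * X = X"
proof (cases "w = 0")
  case True
  then have "X = 0" using assms by simp
  then show ?thesis by simp
next
  case False
  then have "ennreal (1 / w) * ennreal w = 1"
    using assms by (simp add: ennreal_mult[symmetric])
  then show ?thesis by simp
qed

lemma gluing:
  fixes \<pi>1 \<pi>2 :: "('a::metric_space \<times> 'a) measure" and m1 m2 m3 :: "'a measure"
    and A :: "nat \<Rightarrow> 'a set" and D F G :: "'a \<times> 'a \<Rightarrow> ennreal" and c1 c2 c3 :: ennreal
  assumes c1: "\<pi>1 \<in> couplings m1 m2" and c2: "\<pi>2 \<in> couplings m2 m3"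
    and Adisj: "disjoint_family A" and Aun: "(\<Union>i. A i) = UNIV" and Ameas: "\<And>i. A i \<in> sets borel"
    and Dm: "D \<in> borel_measurable (borel \<Otimes>\<^sub>M borel)"
    and Fm: "F \<in> borel_measurable (borel \<Otimes>\<^sub>M borel)"
    and Gm: "G \<in> borel_measurable (borel \<Otimes>\<^sub>M borel)"
    and bound: "\<And>x y y' z i. y \<in> A i \<Longrightarrow> y' \<in> A i \<Longrightarrow> D (x, z) \<le> c1 * F (x, y) + c2 + c3 * G (y', z)"
  shows "\<exists>\<gamma>\<in>couplings m1 m3. (\<integral>\<^sup>+ \<omega>. D \<omega> \<partial>\<gamma>) \<le> c1 * (\<integral>\<^sup>+ \<omega>. F \<omega> \<partial>\<pi>1) + c2 + c3 * (\<integral>\<^sup>+ \<omega>. G \<omega> \<partial>\<pi>2)"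
proof -
  note Ameas[measurable] Dm[measurable] Fm[measurable] Gm[measurable]
  let ?MB = "borel \<Otimes>\<^sub>M borel :: ('a \<times> 'a) measure"
  have p1: "prob_space \<pi>1" and s1: "sets \<pi>1 = sets ?MB" and f1: "distr \<pi>1 borel fst = m1"
    and g1: "distr \<pi>1 borel snd = m2"
    using c1 by (auto simp: couplings_def)
  have p2: "prob_space \<pi>2" and s2: "sets \<pi>2 = sets ?MB" and f2: "distr \<pi>2 borel fst = m2"
    and g2: "distr \<pi>2 borel snd = m3"
    using c2 by (auto simp: couplings_def)
  have sp1: "space \<pi>1 = UNIV" using sets_eq_imp_space_eq[OF s1] by (simp add: space_pair_measure)
  have sp2: "space \<pi>2 = UNIV" using sets_eq_imp_space_eq[OF s2] by (simp add: space_pair_measure)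
  have s12: "sets (\<pi>1 \<Otimes>\<^sub>M \<pi>2) = sets (?MB \<Otimes>\<^sub>M ?MB)"
    by (rule sets_pair_measure_cong[OF s1 s2])
  have sp12: "space (\<pi>1 \<Otimes>\<^sub>M \<pi>2) = UNIV" by (simp add: space_pair_measure sp1 sp2)
  have mc12: "measurable (\<pi>1 \<Otimes>\<^sub>M \<pi>2) N = measurable (?MB \<Otimes>\<^sub>M ?MB) N" for N :: "'b measure"
    by (rule measurable_cong_sets[OF s12 refl])
  have mc1: "measurable \<pi>1 N = measurable ?MB N" for N :: "'b measure"
    by (rule measurable_cong_sets[OF s1 refl])
  have mc2: "measurable \<pi>2 N = measurable ?MB N" for N :: "'b measure"
    by (rule measurable_cong_sets[OF s2 refl])
  interpret P1: prob_space \<pi>1 by (rule p1)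
  interpret P2: prob_space \<pi>2 by (rule p2)
  interpret P12: pair_sigma_finite \<pi>1 \<pi>2
    by (intro pair_sigma_finite.intro prob_space_imp_sigma_finite p1 p2)
  have pm2: "prob_space m2" unfolding g1[symmetric]
    by (rule P1.prob_space_distr) (simp add: mc1)
  interpret PM2: prob_space m2 by (rule pm2)
  define w where "w i = measure m2 (A i)" for i
  have w0: "w i \<ge> 0" for i by (simp add: w_def)
  have e1: "emeasure \<pi>1 (UNIV \<times> A i) = ennreal (w i)" for i
  proof -
    have "emeasure m2 (A i) = emeasure \<pi>1 (snd -` A i \<inter> space \<pi>1)"
      unfolding g1[symmetric] by (rule emeasure_distr) (auto simp: mc1)
    also have "snd -` A i \<inter> space \<pi>1 = UNIV \<times> A i" by (auto simp: sp1)
    finally show ?thesis using PM2.emeasure_eq_measure by (simp add: w_def)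
  qed
  have e2: "emeasure \<pi>2 (A i \<times> UNIV) = ennreal (w i)" for i
  proof -
    have "emeasure m2 (A i) = emeasure \<pi>2 (fst -` A i \<inter> space \<pi>2)"
      unfolding f2[symmetric] by (rule emeasure_distr) (auto simp: mc2)
    also have "fst -` A i \<inter> space \<pi>2 = A i \<times> UNIV" by (auto simp: sp2)
    finally show ?thesis using PM2.emeasure_eq_measure by (simp add: w_def)
  qed
  have UA1: "UNIV \<times> A i \<in> sets \<pi>1" for i unfolding s1 by simp
  have UA2: "A i \<times> UNIV \<in> sets \<pi>2" for i unfolding s2 by simp
  define t where "t i \<omega> = ennreal (1 / w i) * indicator (A i) (snd (fst \<omega>)) * indicator (A i) (fst (snd \<omega>))"
    for i and \<omega> :: "('a \<times> 'a) \<times> ('a \<times> 'a)"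
  define h where "h \<omega> = (\<Sum>i. t i \<omega>)" for \<omega>
  have tm: "t i \<in> borel_measurable (\<pi>1 \<Otimes>\<^sub>M \<pi>2)" for i
    unfolding mc12 t_def by measurable
  have hm: "h \<in> borel_measurable (\<pi>1 \<Otimes>\<^sub>M \<pi>2)"
  proof -
    note tm[measurable]
    show ?thesis unfolding h_def by measurable
  qed
  have sumind: "(\<Sum>i. indicator (A i) y * X) = X" for y and X :: ennreal
    using suminf_indicator[OF Adisj, of y] Aun by simp
  have K1: "(\<integral>\<^sup>+ \<omega>. h \<omega> * F' (fst \<omega>) \<partial>(\<pi>1 \<Otimes>\<^sub>M \<pi>2)) = (\<integral>\<^sup>+ x. F' x \<partial>\<pi>1)"
    if F'm: "F' \<in> borel_measurable ?MB" for F'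
  proof -
    note F'm[measurable]
    have "(\<integral>\<^sup>+ \<omega>. h \<omega> * F' (fst \<omega>) \<partial>(\<pi>1 \<Otimes>\<^sub>M \<pi>2)) = (\<integral>\<^sup>+ \<omega>. (\<Sum>i. t i \<omega> * F' (fst \<omega>)) \<partial>(\<pi>1 \<Otimes>\<^sub>M \<pi>2))"
      by (simp add: h_def)
    also have "\<dots> = (\<Sum>i. \<integral>\<^sup>+ \<omega>. t i \<omega> * F' (fst \<omega>) \<partial>(\<pi>1 \<Otimes>\<^sub>M \<pi>2))"
      by (rule nn_integral_suminf) (unfold mc12 t_def, measurable)
    also have "\<dots> = (\<Sum>i. \<integral>\<^sup>+ x. indicator (A i) (snd x) * F' x \<partial>\<pi>1)"
    proof (rule suminf_cong)
      fix i
      have "(\<integral>\<^sup>+ \<omega>. t i \<omega> * F' (fst \<omega>) \<partial>(\<pi>1 \<Otimes>\<^sub>M \<pi>2))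
          = (\<integral>\<^sup>+ x. \<integral>\<^sup>+ y. t i (x, y) * F' (fst (x, y)) \<partial>\<pi>2 \<partial>\<pi>1)"
        by (rule P2.nn_integral_fst[symmetric]) (unfold mc12 t_def, measurable)
      also have "\<dots> = (\<integral>\<^sup>+ x. \<integral>\<^sup>+ y. (ennreal (1 / w i) * indicator (A i) (snd x) * F' x) * indicator (A i \<times> UNIV) y \<partial>\<pi>2 \<partial>\<pi>1)"
        by (intro nn_integral_cong) (auto simp: t_def split: split_indicator)
      also have "\<dots> = (\<integral>\<^sup>+ x. (ennreal (1 / w i) * ennreal (w i)) * (indicator (A i) (snd x) * F' x) \<partial>\<pi>1)"
        by (intro nn_integral_cong) (subst nn_integral_cmult_indicator[OF UA2], simp add: e2 mult_ac)
      also have "\<dots> = ennreal (1 / w i) * ennreal (w i) * (\<integral>\<^sup>+ x. indicator (A i) (snd x) * F' x \<partial>\<pi>1)"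
        by (rule nn_integral_cmult) (unfold mc1, measurable)
      also have "\<dots> = (\<integral>\<^sup>+ x. indicator (A i) (snd x) * F' x \<partial>\<pi>1)"
      proof (rule aux_w[OF _ w0])
        have "(\<integral>\<^sup>+ x. indicator (A i) (snd x) * F' x \<partial>\<pi>1) \<le> (\<integral>\<^sup>+ x. \<top> * indicator (UNIV \<times> A i) x \<partial>\<pi>1)"
          by (intro nn_integral_mono) (auto split: split_indicator)
        also have "\<dots> = \<top> * ennreal (w i)"
          by (simp add: nn_integral_cmult_indicator[OF UA1] e1)
        finally show "(\<integral>\<^sup>+ x. indicator (A i) (snd x) * F' x \<partial>\<pi>1) \<le> \<top> * ennreal (w i)" .
      qed
      finally show "(\<integral>\<^sup>+ \<omega>. t i \<omega> * F' (fst \<omega>) \<partial>(\<pi>1 \<Otimes>\<^sub>M \<pi>2)) = (\<integral>\<^sup>+ x. indicator (A i) (snd x) * F' x \<partial>\<pi>1)" .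
    qed
    also have "\<dots> = (\<integral>\<^sup>+ x. (\<Sum>i. indicator (A i) (snd x) * F' x) \<partial>\<pi>1)"
      by (rule nn_integral_suminf[symmetric]) (unfold mc1, measurable)
    also have "\<dots> = (\<integral>\<^sup>+ x. F' x \<partial>\<pi>1)"
      by (simp only: sumind)
    finally show ?thesis .
  qed
  have K2: "(\<integral>\<^sup>+ \<omega>. h \<omega> * G' (snd \<omega>) \<partial>(\<pi>1 \<Otimes>\<^sub>M \<pi>2)) = (\<integral>\<^sup>+ y. G' y \<partial>\<pi>2)"
    if G'm: "G' \<in> borel_measurable ?MB" for G'
  proof -
    note G'm[measurable]
    have "(\<integral>\<^sup>+ \<omega>. h \<omega> * G' (snd \<omega>) \<partial>(\<pi>1 \<Otimes>\<^sub>M \<pi>2)) = (\<integral>\<^sup>+ \<omega>. (\<Sum>i. t i \<omega> * G' (snd \<omega>)) \<partial>(\<pi>1 \<Otimes>\<^sub>M \<pi>2))"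
      by (simp add: h_def)
    also have "\<dots> = (\<Sum>i. \<integral>\<^sup>+ \<omega>. t i \<omega> * G' (snd \<omega>) \<partial>(\<pi>1 \<Otimes>\<^sub>M \<pi>2))"
      by (rule nn_integral_suminf) (unfold mc12 t_def, measurable)
    also have "\<dots> = (\<Sum>i. \<integral>\<^sup>+ y. indicator (A i) (fst y) * G' y \<partial>\<pi>2)"
    proof (rule suminf_cong)
      fix i
      have "(\<integral>\<^sup>+ \<omega>. t i \<omega> * G' (snd \<omega>) \<partial>(\<pi>1 \<Otimes>\<^sub>M \<pi>2))
          = (\<integral>\<^sup>+ y. \<integral>\<^sup>+ x. t i (x, y) * G' (snd (x, y)) \<partial>\<pi>1 \<partial>\<pi>2)"
        by (rule P12.nn_integral_snd[symmetric]) (unfold mc12 t_def, measurable)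
      also have "\<dots> = (\<integral>\<^sup>+ y. \<integral>\<^sup>+ x. (ennreal (1 / w i) * indicator (A i) (fst y) * G' y) * indicator (UNIV \<times> A i) x \<partial>\<pi>1 \<partial>\<pi>2)"
        by (intro nn_integral_cong) (auto simp: t_def split: split_indicator)
      also have "\<dots> = (\<integral>\<^sup>+ y. (ennreal (1 / w i) * ennreal (w i)) * (indicator (A i) (fst y) * G' y) \<partial>\<pi>2)"
        by (intro nn_integral_cong) (subst nn_integral_cmult_indicator[OF UA1], simp add: e1 mult_ac)
      also have "\<dots> = ennreal (1 / w i) * ennreal (w i) * (\<integral>\<^sup>+ y. indicator (A i) (fst y) * G' y \<partial>\<pi>2)"
        by (rule nn_integral_cmult) (unfold mc2, measurable)
      also have "\<dots> = (\<integral>\<^sup>+ y. indicator (A i) (fst y) * G' y \<partial>\<pi>2)"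
      proof (rule aux_w[OF _ w0])
        have "(\<integral>\<^sup>+ y. indicator (A i) (fst y) * G' y \<partial>\<pi>2) \<le> (\<integral>\<^sup>+ y. \<top> * indicator (A i \<times> UNIV) y \<partial>\<pi>2)"
          by (intro nn_integral_mono) (auto split: split_indicator)
        also have "\<dots> = \<top> * ennreal (w i)"
          by (simp add: nn_integral_cmult_indicator[OF UA2] e2)
        finally show "(\<integral>\<^sup>+ y. indicator (A i) (fst y) * G' y \<partial>\<pi>2) \<le> \<top> * ennreal (w i)" .
      qed
      finally show "(\<integral>\<^sup>+ \<omega>. t i \<omega> * G' (snd \<omega>) \<partial>(\<pi>1 \<Otimes>\<^sub>M \<pi>2)) = (\<integral>\<^sup>+ y. indicator (A i) (fst y) * G' y \<partial>\<pi>2)" .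
    qed
    also have "\<dots> = (\<integral>\<^sup>+ y. (\<Sum>i. indicator (A i) (fst y) * G' y) \<partial>\<pi>2)"
      by (rule nn_integral_suminf[symmetric]) (unfold mc2, measurable)
    also have "\<dots> = (\<integral>\<^sup>+ y. G' y \<partial>\<pi>2)"
      by (simp only: sumind)
    finally show ?thesis .
  qed
  define T where "T \<omega> = (fst (fst \<omega>), snd (snd \<omega>))" for \<omega> :: "('a \<times> 'a) \<times> ('a \<times> 'a)"
  define \<Lambda> where "\<Lambda> = density (\<pi>1 \<Otimes>\<^sub>M \<pi>2) h"
  define \<gamma> where "\<gamma> = distr \<Lambda> ?MB T"
  have Tm: "T \<in> measurable \<Lambda> ?MB"
    unfolding \<Lambda>_def measurable_density_eq1 mc12 T_def by measurable
  have sg: "sets \<gamma> = sets ?MB" by (simp add: \<gamma>_def)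
  have spg: "space \<gamma> = UNIV" by (simp add: \<gamma>_def space_pair_measure)
  have eg: "emeasure \<gamma> B = (\<integral>\<^sup>+ \<omega>. h \<omega> * indicator B (T \<omega>) \<partial>(\<pi>1 \<Otimes>\<^sub>M \<pi>2))"
    if B: "B \<in> sets ?MB" for B
  proof -
    have "emeasure \<gamma> B = emeasure \<Lambda> (T -` B \<inter> space \<Lambda>)"
      unfolding \<gamma>_def by (rule emeasure_distr[OF Tm B])
    also have "\<dots> = (\<integral>\<^sup>+ \<omega>. h \<omega> * indicator (T -` B \<inter> space \<Lambda>) \<omega> \<partial>(\<pi>1 \<Otimes>\<^sub>M \<pi>2))"
      unfolding \<Lambda>_def by (rule emeasure_density[OF hm]) (use measurable_sets[OF Tm B] in \<open>simp add: \<Lambda>_def\<close>)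
    also have "\<dots> = (\<integral>\<^sup>+ \<omega>. h \<omega> * indicator B (T \<omega>) \<partial>(\<pi>1 \<Otimes>\<^sub>M \<pi>2))"
      by (intro nn_integral_cong) (simp add: \<Lambda>_def sp12 split: split_indicator)
    finally show ?thesis .
  qed
  have marg1: "distr \<gamma> borel fst = m1"
  proof (rule measure_eqI)
    show "sets (distr \<gamma> borel fst) = sets m1" using f1 by auto
    fix S assume "S \<in> sets (distr \<gamma> borel fst)"
    then have S: "S \<in> sets borel" by simp
    note S[measurable]
    have "emeasure (distr \<gamma> borel fst) S = emeasure \<gamma> (fst -` S \<inter> space \<gamma>)"
      by (rule emeasure_distr) (auto simp: measurable_cong_sets[OF sg refl])
    also have "fst -` S \<inter> space \<gamma> = S \<times> UNIV" by (auto simp: spg)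
    also have "emeasure \<gamma> (S \<times> UNIV) = (\<integral>\<^sup>+ \<omega>. h \<omega> * indicator (S \<times> UNIV) (fst \<omega>) \<partial>(\<pi>1 \<Otimes>\<^sub>M \<pi>2))"
      by (subst eg) (auto simp: T_def split: split_indicator intro!: nn_integral_cong)
    also have "\<dots> = (\<integral>\<^sup>+ x. indicator (S \<times> UNIV) x \<partial>\<pi>1)"
      by (rule K1) measurable
    also have "\<dots> = emeasure \<pi>1 (S \<times> UNIV)"
      by (rule nn_integral_indicator) (simp add: s1)
    also have "\<dots> = emeasure m1 S"
    proof -
      have "emeasure m1 S = emeasure \<pi>1 (fst -` S \<inter> space \<pi>1)"
        unfolding f1[symmetric] by (rule emeasure_distr) (auto simp: mc1)
      also have "fst -` S \<inter> space \<pi>1 = S \<times> UNIV" by (auto simp: sp1)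
      finally show ?thesis by simp
    qed
    finally show "emeasure (distr \<gamma> borel fst) S = emeasure m1 S" .
  qed
  have marg2: "distr \<gamma> borel snd = m3"
  proof (rule measure_eqI)
    show "sets (distr \<gamma> borel snd) = sets m3" using g2 by auto
    fix S assume "S \<in> sets (distr \<gamma> borel snd)"
    then have S: "S \<in> sets borel" by simp
    note S[measurable]
    have "emeasure (distr \<gamma> borel snd) S = emeasure \<gamma> (snd -` S \<inter> space \<gamma>)"
      by (rule emeasure_distr) (auto simp: measurable_cong_sets[OF sg refl])
    also have "snd -` S \<inter> space \<gamma> = UNIV \<times> S" by (auto simp: spg)
    also have "emeasure \<gamma> (UNIV \<times> S) = (\<integral>\<^sup>+ \<omega>. h \<omega> * indicator (UNIV \<times> S) (snd \<omega>) \<partial>(\<pi>1 \<Otimes>\<^sub>M \<pi>2))"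
      by (subst eg) (auto simp: T_def split: split_indicator intro!: nn_integral_cong)
    also have "\<dots> = (\<integral>\<^sup>+ x. indicator (UNIV \<times> S) x \<partial>\<pi>2)"
      by (rule K2) measurable
    also have "\<dots> = emeasure \<pi>2 (UNIV \<times> S)"
      by (rule nn_integral_indicator) (simp add: s2)
    also have "\<dots> = emeasure m3 S"
    proof -
      have "emeasure m3 S = emeasure \<pi>2 (snd -` S \<inter> space \<pi>2)"
        unfolding g2[symmetric] by (rule emeasure_distr) (auto simp: mc2)
      also have "snd -` S \<inter> space \<pi>2 = UNIV \<times> S" by (auto simp: sp2)
      finally show ?thesis by simp
    qed
    finally show "emeasure (distr \<gamma> borel snd) S = emeasure m3 S" .
  qed
  have pg: "prob_space \<gamma>"
  proof (rule prob_spaceI)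
    have "emeasure \<gamma> (space \<gamma>) = (\<integral>\<^sup>+ \<omega>. h \<omega> * (\<lambda>_. 1) (fst \<omega>) \<partial>(\<pi>1 \<Otimes>\<^sub>M \<pi>2))"
      using sets.top[of ?MB] by (subst eg) (auto simp: spg space_pair_measure intro!: nn_integral_cong)
    also have "\<dots> = (\<integral>\<^sup>+ x. 1 \<partial>\<pi>1)" by (rule K1) simp
    also have "\<dots> = 1" using P1.emeasure_space_1 by simp
    finally show "emeasure \<gamma> (space \<gamma>) = 1" .
  qed
  have gc: "\<gamma> \<in> couplings m1 m3"
    unfolding couplings_def using pg sg marg1 marg2 by auto
  have "(\<integral>\<^sup>+ \<omega>. D \<omega> \<partial>\<gamma>) = (\<integral>\<^sup>+ \<omega>. D (T \<omega>) \<partial>\<Lambda>)"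
    unfolding \<gamma>_def by (rule nn_integral_distr[OF Tm]) simp
  also have "\<dots> = (\<integral>\<^sup>+ \<omega>. h \<omega> * D (T \<omega>) \<partial>(\<pi>1 \<Otimes>\<^sub>M \<pi>2))"
    unfolding \<Lambda>_def by (rule nn_integral_density[OF hm]) (unfold mc12 T_def, measurable)
  also have "\<dots> \<le> (\<integral>\<^sup>+ \<omega>. c1 * (h \<omega> * F (fst \<omega>)) + c2 * h \<omega> + c3 * (h \<omega> * G (snd \<omega>)) \<partial>(\<pi>1 \<Otimes>\<^sub>M \<pi>2))"
  proof (rule nn_integral_mono)
    fix \<omega> :: "('a \<times> 'a) \<times> ('a \<times> 'a)"
    obtain x y y' z where om: "\<omega> = ((x, y), (y', z))" by (metis prod.collapse)
    show "h \<omega> * D (T \<omega>) \<le> c1 * (h \<omega> * F (fst \<omega>)) + c2 * h \<omega> + c3 * (h \<omega> * G (snd \<omega>))"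
    proof (cases "\<exists>i. y \<in> A i \<and> y' \<in> A i")
      case True
      then obtain i where "y \<in> A i" "y' \<in> A i" by blast
      then have "D (x, z) \<le> c1 * F (x, y) + c2 + c3 * G (y', z)" by (rule bound)
      then have "h \<omega> * D (x, z) \<le> h \<omega> * (c1 * F (x, y) + c2 + c3 * G (y', z))"
        by (rule mult_left_mono) simp
      then show ?thesis by (simp add: om T_def algebra_simps)
    next
      case False
      then have "t i \<omega> = 0" for i by (auto simp: t_def om split: split_indicator)
      then have "h \<omega> = 0" by (simp add: h_def)
      then show ?thesis by simp
    qed
  qed
  also have "\<dots> = c1 * (\<integral>\<^sup>+ \<omega>. h \<omega> * F (fst \<omega>) \<partial>(\<pi>1 \<Otimes>\<^sub>M \<pi>2)) + c2 * (\<integral>\<^sup>+ \<omega>. h \<omega> * (\<lambda>_. 1) (fst \<omega>) \<partial>(\<pi>1 \<Otimes>\<^sub>M \<pi>2))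
       + c3 * (\<integral>\<^sup>+ \<omega>. h \<omega> * G (snd \<omega>) \<partial>(\<pi>1 \<Otimes>\<^sub>M \<pi>2))"
  proof -
    have hm': "h \<in> borel_measurable (?MB \<Otimes>\<^sub>M ?MB)" using hm by (simp add: mc12)
    note hm'[measurable]
    let ?M = "\<pi>1 \<Otimes>\<^sub>M \<pi>2"
    have "(\<integral>\<^sup>+ \<omega>. c1 * (h \<omega> * F (fst \<omega>)) + c2 * h \<omega> + c3 * (h \<omega> * G (snd \<omega>)) \<partial>?M)
        = (\<integral>\<^sup>+ \<omega>. c1 * (h \<omega> * F (fst \<omega>)) + c2 * h \<omega> \<partial>?M) + (\<integral>\<^sup>+ \<omega>. c3 * (h \<omega> * G (snd \<omega>)) \<partial>?M)"
      by (rule nn_integral_add; unfold mc12; measurable)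
    also have "(\<integral>\<^sup>+ \<omega>. c1 * (h \<omega> * F (fst \<omega>)) + c2 * h \<omega> \<partial>?M)
        = (\<integral>\<^sup>+ \<omega>. c1 * (h \<omega> * F (fst \<omega>)) \<partial>?M) + (\<integral>\<^sup>+ \<omega>. c2 * h \<omega> \<partial>?M)"
      by (rule nn_integral_add; unfold mc12; measurable)
    also have "(\<integral>\<^sup>+ \<omega>. c1 * (h \<omega> * F (fst \<omega>)) \<partial>?M) = c1 * (\<integral>\<^sup>+ \<omega>. h \<omega> * F (fst \<omega>) \<partial>?M)"
      by (rule nn_integral_cmult; unfold mc12; measurable)
    also have "(\<integral>\<^sup>+ \<omega>. c2 * h \<omega> \<partial>?M) = c2 * (\<integral>\<^sup>+ \<omega>. h \<omega> * (\<lambda>_. 1) (fst \<omega>) \<partial>?M)"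
      using nn_integral_cmult[OF hm, of c2] by simp
    also have "(\<integral>\<^sup>+ \<omega>. c3 * (h \<omega> * G (snd \<omega>)) \<partial>?M) = c3 * (\<integral>\<^sup>+ \<omega>. h \<omega> * G (snd \<omega>) \<partial>?M)"
      by (rule nn_integral_cmult; unfold mc12; measurable)
    finally show ?thesis .
  qed
  also have "\<dots> = c1 * (\<integral>\<^sup>+ \<omega>. F \<omega> \<partial>\<pi>1) + c2 * (\<integral>\<^sup>+ x. 1 \<partial>\<pi>1) + c3 * (\<integral>\<^sup>+ \<omega>. G \<omega> \<partial>\<pi>2)"
  proof -
    have K1c: "(\<integral>\<^sup>+ \<omega>. h \<omega> * 1 \<partial>(\<pi>1 \<Otimes>\<^sub>M \<pi>2)) = (\<integral>\<^sup>+ x. 1 \<partial>\<pi>1)"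
      using K1[of "\<lambda>_. 1"] by simp
    show ?thesis by (simp only: K1[OF Fm] K1c K2[OF Gm])
  qed
  also have "\<dots> = c1 * (\<integral>\<^sup>+ \<omega>. F \<omega> \<partial>\<pi>1) + c2 + c3 * (\<integral>\<^sup>+ \<omega>. G \<omega> \<partial>\<pi>2)"
    using P1.emeasure_space_1 by simp
  finally show ?thesis using gc by blast
qed


lemma Wp_nonneg: "Wp p m n \<ge> 0"
  by (simp add: Wp_def)

lemma half_bound:
  fixes a b p :: real
  assumes "p \<ge> 1" "a \<ge> 0" "b \<ge> 0"
  shows "(a + b) powr p \<le> (1/2) powr (1 - p) * a powr p + (1/2) powr (1 - p) * b powr p"
  using conv2[OF assms, of "1/2"] by simp

lemma Pp_moment:
  fixes m :: "'a::metric_space measure"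
  assumes m: "m \<in> Pp p" and p: "p \<ge> 1"
  shows "(\<integral>\<^sup>+ x. ennreal (dist x1 x powr p) \<partial>m) < \<infinity>"
proof -
  from m obtain x0 where pm: "prob_space m" and sm: "sets m = sets borel"
    and fin: "(\<integral>\<^sup>+ x. ennreal (dist x0 x powr p) \<partial>m) < \<infinity>"
    unfolding Pp_def by auto
  interpret PM: prob_space m by (rule pm)
  define K where "K = (1/2::real) powr (1 - p)"
  have K0: "K \<ge> 0" by (simp add: K_def)
  have mc: "measurable m N = measurable borel N" for N :: "'b measure"
    by (rule measurable_cong_sets[OF sm refl])
  have "(\<integral>\<^sup>+ x. ennreal (dist x1 x powr p) \<partial>m) \<le>
      (\<integral>\<^sup>+ x. ennreal (K * dist x1 x0 powr p) + ennreal K * ennreal (dist x0 x powr p) \<partial>m)"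
  proof (rule nn_integral_mono)
    fix x
    have "dist x1 x powr p \<le> (dist x1 x0 + dist x0 x) powr p"
      using p by (intro powr_mono2 dist_triangle) auto
    also have "\<dots> \<le> K * dist x1 x0 powr p + K * dist x0 x powr p"
      unfolding K_def using p by (intro half_bound) auto
    finally show "ennreal (dist x1 x powr p) \<le> ennreal (K * dist x1 x0 powr p) + ennreal K * ennreal (dist x0 x powr p)"
      using K0 by (simp add: ennreal_plus[symmetric] ennreal_mult[symmetric] del: ennreal_plus)
  qed
  also have "\<dots> = ennreal (K * dist x1 x0 powr p) * emeasure m (space m) + ennreal K * (\<integral>\<^sup>+ x. ennreal (dist x0 x powr p) \<partial>m)"
    by (subst nn_integral_add) (auto simp: mc nn_integral_cmult)
  also have "\<dots> < \<infinity>" using fin PM.emeasure_space_1 by (simp add: ennreal_mult_less_top)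
  finally show ?thesis .
qed

definition cost :: "real \<Rightarrow> ('a::metric_space \<times> 'a) measure \<Rightarrow> ennreal" where
  "cost p pc = (\<integral>\<^sup>+ xy. ennreal (dist (fst xy) (snd xy) powr p) \<partial>pc)"

lemma Wp_cost: "Wp p m n = enn2real (INF pc \<in> couplings m n. cost p pc) powr (1 / p)"
  by (simp add: Wp_def cost_def)

lemma cost_fin:
  fixes m1 m2 :: "'a::metric_space measure"
  assumes m1: "m1 \<in> Pp p" and m2: "m2 \<in> Pp p" and p: "p \<ge> 1" and c: "pc \<in> couplings m1 m2"
  shows "cost p pc < \<infinity>"
proof -
  obtain x1 :: 'a where True by blast
  have s1: "sets pc = sets (borel \<Otimes>\<^sub>M borel)" and f1: "distr pc borel fst = m1" and g1: "distr pc borel snd = m2"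
    using c by (auto simp: couplings_def)
  have mc: "measurable pc N = measurable (borel \<Otimes>\<^sub>M borel) N" for N :: "'b measure"
    by (rule measurable_cong_sets[OF s1 refl])
  define K where "K = (1/2::real) powr (1 - p)"
  have K0: "K \<ge> 0" by (simp add: K_def)
  have "cost p pc \<le> (\<integral>\<^sup>+ xy. ennreal K * ennreal (dist x1 (fst xy) powr p) + ennreal K * ennreal (dist x1 (snd xy) powr p) \<partial>pc)"
    unfolding cost_def
  proof (rule nn_integral_mono)
    fix xy :: "'a \<times> 'a"
    have "dist (fst xy) (snd xy) powr p \<le> (dist x1 (fst xy) + dist x1 (snd xy)) powr p"
      using p by (intro powr_mono2 dist_triangle3) auto
    also have "\<dots> \<le> K * dist x1 (fst xy) powr p + K * dist x1 (snd xy) powr p"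
      unfolding K_def using p by (intro half_bound) auto
    finally show "ennreal (dist (fst xy) (snd xy) powr p) \<le> ennreal K * ennreal (dist x1 (fst xy) powr p) + ennreal K * ennreal (dist x1 (snd xy) powr p)"
      using K0 by (simp add: ennreal_plus[symmetric] ennreal_mult[symmetric] del: ennreal_plus)
  qed
  also have "\<dots> = ennreal K * (\<integral>\<^sup>+ xy. ennreal (dist x1 (fst xy) powr p) \<partial>pc) + ennreal K * (\<integral>\<^sup>+ xy. ennreal (dist x1 (snd xy) powr p) \<partial>pc)"
    by (subst nn_integral_add) (auto simp: mc nn_integral_cmult)
  also have "(\<integral>\<^sup>+ xy. ennreal (dist x1 (fst xy) powr p) \<partial>pc) = (\<integral>\<^sup>+ x. ennreal (dist x1 x powr p) \<partial>m1)"
    unfolding f1[symmetric] by (rule nn_integral_distr[symmetric]) (auto simp: mc)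
  also have "(\<integral>\<^sup>+ xy. ennreal (dist x1 (snd xy) powr p) \<partial>pc) = (\<integral>\<^sup>+ x. ennreal (dist x1 x powr p) \<partial>m2)"
    unfolding g1[symmetric] by (rule nn_integral_distr[symmetric]) (auto simp: mc)
  also have "ennreal K * (\<integral>\<^sup>+ x. ennreal (dist x1 x powr p) \<partial>m1) + ennreal K * (\<integral>\<^sup>+ x. ennreal (dist x1 x powr p) \<partial>m2) < \<infinity>"
    using Pp_moment[OF m1 p, of x1] Pp_moment[OF m2 p, of x1] by (simp add: ennreal_mult_less_top)
  finally show ?thesis .
qed

lemma prod_coupling:
  fixes m1 m2 :: "'a::metric_space measure"
  assumes m1: "m1 \<in> Pp p" and m2: "m2 \<in> Pp p"
  shows "m1 \<Otimes>\<^sub>M m2 \<in> couplings m1 m2"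
proof -
  have p1: "prob_space m1" and s1: "sets m1 = sets borel" using m1 by (auto simp: Pp_def)
  have p2: "prob_space m2" and s2: "sets m2 = sets borel" using m2 by (auto simp: Pp_def)
  have sp1: "space m1 = UNIV" using sets_eq_imp_space_eq[OF s1] by simp
  have sp2: "space m2 = UNIV" using sets_eq_imp_space_eq[OF s2] by simp
  interpret P1: prob_space m1 by (rule p1)
  interpret P2: prob_space m2 by (rule p2)
  have ss: "sets (m1 \<Otimes>\<^sub>M m2) = sets (borel \<Otimes>\<^sub>M borel)" by (rule sets_pair_measure_cong[OF s1 s2])
  have mc: "measurable (m1 \<Otimes>\<^sub>M m2) N = measurable (borel \<Otimes>\<^sub>M borel) N" for N :: "'b measure"
    by (rule measurable_cong_sets[OF ss refl])
  have d1: "distr (m1 \<Otimes>\<^sub>M m2) borel fst = m1"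
  proof -
    have "distr (m1 \<Otimes>\<^sub>M m2) borel fst = distr (m1 \<Otimes>\<^sub>M m2) m1 fst"
      by (rule distr_cong) (auto simp: s1)
    also have "\<dots> = m1" by (rule P2.distr_pair_fst)
    finally show ?thesis .
  qed
  have d2: "distr (m1 \<Otimes>\<^sub>M m2) borel snd = m2"
  proof (rule measure_eqI)
    show "sets (distr (m1 \<Otimes>\<^sub>M m2) borel snd) = sets m2" by (simp add: s2)
    fix S assume "S \<in> sets (distr (m1 \<Otimes>\<^sub>M m2) borel snd)"
    then have S: "S \<in> sets borel" by simp
    have "emeasure (distr (m1 \<Otimes>\<^sub>M m2) borel snd) S = emeasure (m1 \<Otimes>\<^sub>M m2) (snd -` S \<inter> space (m1 \<Otimes>\<^sub>M m2))"
      by (rule emeasure_distr) (auto simp: mc S)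
    also have "snd -` S \<inter> space (m1 \<Otimes>\<^sub>M m2) = space m1 \<times> S"
      by (auto simp: space_pair_measure sp1 sp2)
    also have "emeasure (m1 \<Otimes>\<^sub>M m2) (space m1 \<times> S) = emeasure m1 (space m1) * emeasure m2 S"
      using S s2 by (intro P2.emeasure_pair_measure_Times) auto
    also have "\<dots> = emeasure m2 S" by (simp add: P1.emeasure_space_1)
    finally show "emeasure (distr (m1 \<Otimes>\<^sub>M m2) borel snd) S = emeasure m2 S" .
  qed
  show ?thesis unfolding couplings_def
    using prob_space_pair[OF p1 p2] ss d1 d2 by auto
qed

lemma INF_fin:
  fixes m1 m2 :: "'a::metric_space measure"
  assumes m1: "m1 \<in> Pp p" and m2: "m2 \<in> Pp p" and p: "p \<ge> 1"
  shows "(INF pc \<in> couplings m1 m2. cost p pc) < \<infinity>"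
  using cost_fin[OF m1 m2 p prod_coupling[OF m1 m2]] prod_coupling[OF m1 m2]
proof -
  have "(INF pc \<in> couplings m1 m2. cost p pc) \<le> cost p (m1 \<Otimes>\<^sub>M m2)"
    by (rule INF_lower[OF prod_coupling[OF m1 m2]])
  then show ?thesis using cost_fin[OF m1 m2 p prod_coupling[OF m1 m2]] by (rule le_less_trans)
qed

lemma good_coupling:
  fixes m1 m2 :: "'a::metric_space measure"
  assumes m1: "m1 \<in> Pp p" and m2: "m2 \<in> Pp p" and p: "p \<ge> 1" and a: "Wp p m1 m2 < a"
  shows "\<exists>pc\<in>couplings m1 m2. cost p pc < ennreal (a powr p)"
proof -
  let ?I = "INF pc \<in> couplings m1 m2. cost p pc"
  have fin: "?I < \<infinity>" by (rule INF_fin[OF m1 m2 p])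
  define r where "r = enn2real ?I"
  have r0: "r \<ge> 0" by (simp add: r_def)
  have Ir: "?I = ennreal r" using fin by (simp add: r_def)
  have "r powr (1 / p) < a" using a by (simp add: Wp_cost r_def)
  moreover have a0: "a > 0"
  proof -
    have "0 \<le> Wp p m1 m2" by (rule Wp_nonneg)
    then show ?thesis using a by simp
  qed
  ultimately have "(r powr (1 / p)) powr p < a powr p"
    using p r0 by (intro powr_less_mono2) auto
  moreover have "(r powr (1 / p)) powr p = r"
    using p r0 by (simp add: powr_powr)
  ultimately have "r < a powr p" by simp
  then have "?I < ennreal (a powr p)" unfolding Ir using a0 by (intro ennreal_lessI) auto
  then show ?thesis by (simp add: INF_less_iff)
qed

lemma weight_id:
  fixes x S p :: real
  assumes "x > 0" "S > 0"
  shows "(x / S) powr (1 - p) * x powr p = x * S powr (p - 1)"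
proof -
  have "(x / S) powr (1 - p) * x powr p = (x powr (1 - p) * x powr p) / S powr (1 - p)"
    using assms by (simp add: powr_divide)
  also have "x powr (1 - p) * x powr p = x"
    using assms by (simp add: powr_add[symmetric])
  also have "S powr (p - 1) = inverse (S powr (1 - p))"
    using powr_minus[of S "1 - p"] by simp
  then have "x / S powr (1 - p) = x * S powr (p - 1)" by (simp add: divide_inverse)
  finally show ?thesis .
qed

lemma partition_exists:
  assumes sep: "separable_space (euclidean :: 'a::metric_space topology)" and c: "c > 0"
  shows "\<exists>A :: nat \<Rightarrow> 'a set. disjoint_family A \<and> (\<Union>i. A i) = UNIV \<and> (\<forall>i. A i \<in> sets borel)
           \<and> (\<forall>i y y'. y \<in> A i \<longrightarrow> y' \<in> A i \<longrightarrow> dist y y' < c)"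
proof -
  obtain q :: "nat \<Rightarrow> 'a" where q: "\<And>x e. e > 0 \<Longrightarrow> \<exists>i. dist (q i) x < e"
    using sep_seq[OF sep] by blast
  define B where "B i = ball (q i) (c / 2)" for i
  define A where "A = disjointed B"
  have d: "disjoint_family A" unfolding A_def by (rule disjoint_family_disjointed)
  have cov: "x \<in> (\<Union>i. B i)" for x
  proof -
    obtain i where "dist (q i) x < c / 2" using q[of "c/2"] c by auto
    then have "x \<in> B i" by (simp add: B_def)
    then show ?thesis by blast
  qed
  have u: "(\<Union>i. A i) = UNIV"
  proof -
    have "(\<Union>i. B i) = UNIV" using cov by blast
    then show ?thesis unfolding A_def using UN_disjointed_eq[of B] by simp
  qed
  have rB: "range B \<subseteq> sets borel" unfolding B_def by (auto intro!: borel_open)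
  have m: "\<forall>i. A i \<in> sets borel"
    using sets.range_disjointed_sets[OF rB] unfolding A_def by blast
  have sm: "\<forall>i y y'. y \<in> A i \<longrightarrow> y' \<in> A i \<longrightarrow> dist y y' < c"
  proof (intro allI impI)
    fix i y y' assume yA: "y \<in> A i" and y'A: "y' \<in> A i"
    have "y \<in> B i" using yA disjointed_subset[of B i] unfolding A_def by blast
    moreover have "y' \<in> B i" using y'A disjointed_subset[of B i] unfolding A_def by blast
    ultimately have "dist (q i) y < c / 2" "dist (q i) y' < c / 2" by (simp_all add: B_def)
    then show "dist y y' < c" using dist_triangle3[of y y' "q i"] by linarith
  qed
  show ?thesis using d u m sm by blast
qed

lemma Wp_tri_key:
  fixes m1 m2 m3 :: "'a::metric_space measure"
  assumes sep: "separable_space (euclidean :: 'a topology)"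
    and m1: "m1 \<in> Pp p" and m2: "m2 \<in> Pp p" and m3: "m3 \<in> Pp p" and p: "p \<ge> 1"
    and a: "Wp p m1 m2 < a" and b: "Wp p m2 m3 < b" and c: "c > 0"
  shows "Wp p m1 m3 \<le> a + b + c"
proof -
  have a0: "a > 0" using a Wp_nonneg[of p m1 m2] by simp
  have b0: "b > 0" using b Wp_nonneg[of p m2 m3] by simp
  obtain pi1 where pi1: "pi1 \<in> couplings m1 m2" "cost p pi1 < ennreal (a powr p)"
    using good_coupling[OF m1 m2 p a] by blast
  obtain pi2 where pi2: "pi2 \<in> couplings m2 m3" "cost p pi2 < ennreal (b powr p)"
    using good_coupling[OF m2 m3 p b] by blast
  obtain A :: "nat \<Rightarrow> 'a set" where A: "disjoint_family A" "(\<Union>i. A i) = UNIV" "\<And>i. A i \<in> sets borel"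
    and Ad: "\<And>i y y'. y \<in> A i \<Longrightarrow> y' \<in> A i \<Longrightarrow> dist y y' < c"
    using partition_exists[OF sep c] by blast
  define S where "S = a + b + c"
  have S0: "S > 0" using a0 b0 c by (simp add: S_def)
  define K1 where "K1 = (a / S) powr (1 - p)"
  define K2 where "K2 = (c / S) powr (1 - p)"
  define K3 where "K3 = (b / S) powr (1 - p)"
  have K0: "K1 \<ge> 0" "K2 \<ge> 0" "K3 \<ge> 0" by (auto simp: K1_def K2_def K3_def)
  define D where "D \<omega> = ennreal (dist (fst \<omega>) (snd \<omega>) powr p)" for \<omega> :: "'a \<times> 'a"
  have Dm: "D \<in> borel_measurable (borel \<Otimes>\<^sub>M borel)"
  proof -
    note dist_meas[OF sep, measurable]
    show ?thesis unfolding D_def by measurable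
  qed
  have bound: "D (x, z) \<le> ennreal K1 * D (x, y) + ennreal (K2 * c powr p) + ennreal K3 * D (y', z)"
    if "y \<in> A i" "y' \<in> A i" for x y y' z i
  proof -
    have dyy: "dist y y' \<le> c" using Ad[OF that] by simp
    have "dist x z powr p \<le> (dist x y + c + dist y' z) powr p"
    proof (rule powr_mono2)
      show "dist x z \<le> dist x y + c + dist y' z"
        using dist_triangle[of x z y] dist_triangle[of y z y'] dyy by simp
    qed (use p in auto)
    also have "\<dots> \<le> K1 * dist x y powr p + K2 * c powr p + K3 * dist y' z powr p"
    proof -
      have "a + c + b = S" by (simp add: S_def)
      then have wsum: "a / S + c / S + b / S = 1" using S0 by (simp add: add_divide_distrib[symmetric])
      show ?thesis
        unfolding K1_def K2_def K3_def using p c a0 b0 S0 wsum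
        by (intro conv3) auto
    qed
    finally show ?thesis
      using K0 c by (simp add: D_def ennreal_plus[symmetric] ennreal_mult[symmetric] del: ennreal_plus)
  qed
  obtain \<gamma> where g: "\<gamma> \<in> couplings m1 m3"
    and gb: "(\<integral>\<^sup>+ \<omega>. D \<omega> \<partial>\<gamma>) \<le> ennreal K1 * (\<integral>\<^sup>+ \<omega>. D \<omega> \<partial>pi1) + ennreal (K2 * c powr p) + ennreal K3 * (\<integral>\<^sup>+ \<omega>. D \<omega> \<partial>pi2)"
  proof -
    have "\<exists>\<gamma>\<in>couplings m1 m3. (\<integral>\<^sup>+ \<omega>. D \<omega> \<partial>\<gamma>) \<le> ennreal K1 * (\<integral>\<^sup>+ \<omega>. D \<omega> \<partial>pi1) + ennreal (K2 * c powr p) + ennreal K3 * (\<integral>\<^sup>+ \<omega>. D \<omega> \<partial>pi2)"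
      by (rule gluing[OF pi1(1) pi2(1) A Dm Dm Dm]) (rule bound, assumption+)
    then show ?thesis using that by blast
  qed
  have "(INF pc \<in> couplings m1 m3. cost p pc) \<le> cost p \<gamma>" using g by (rule INF_lower)
  also have "cost p \<gamma> = (\<integral>\<^sup>+ \<omega>. D \<omega> \<partial>\<gamma>)" by (simp add: cost_def D_def)
  also have "\<dots> \<le> ennreal K1 * ennreal (a powr p) + ennreal (K2 * c powr p) + ennreal K3 * ennreal (b powr p)"
  proof -
    have "(\<integral>\<^sup>+ \<omega>. D \<omega> \<partial>pi1) \<le> ennreal (a powr p)" using pi1(2) by (simp add: cost_def D_def)
    moreover have "(\<integral>\<^sup>+ \<omega>. D \<omega> \<partial>pi2) \<le> ennreal (b powr p)" using pi2(2) by (simp add: cost_def D_def)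
    ultimately show ?thesis
      by (intro order_trans[OF gb] add_mono mult_left_mono order_refl) auto
  qed
  also have "\<dots> = ennreal (K1 * a powr p + K2 * c powr p + K3 * b powr p)"
    using K0 by (simp add: ennreal_plus[symmetric] ennreal_mult[symmetric] del: ennreal_plus)
  also have "K1 * a powr p + K2 * c powr p + K3 * b powr p = S powr p"
  proof -
    have "K1 * a powr p + K2 * c powr p + K3 * b powr p = (a + c + b) * S powr (p - 1)"
    proof -
      have w1: "K1 * a powr p = a * S powr (p - 1)" unfolding K1_def by (rule weight_id[OF a0 S0])
      have w2: "K2 * c powr p = c * S powr (p - 1)" unfolding K2_def by (rule weight_id[OF c S0])
      have w3: "K3 * b powr p = b * S powr (p - 1)" unfolding K3_def by (rule weight_id[OF b0 S0])
      show ?thesis unfolding w1 w2 w3 by (simp add: algebra_simps)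
    qed
    also have "\<dots> = S * S powr (p - 1)" by (simp add: S_def)
    also have "\<dots> = S powr p" using S0 by (simp add: powr_add[symmetric] powr_diff)
    finally show ?thesis .
  qed
  finally have I: "(INF pc \<in> couplings m1 m3. cost p pc) \<le> ennreal (S powr p)" .
  have "enn2real (INF pc \<in> couplings m1 m3. cost p pc) \<le> S powr p"
    using I by (intro enn2real_leI) auto
  then have "Wp p m1 m3 \<le> (S powr p) powr (1 / p)"
    unfolding Wp_cost using p by (intro powr_mono2) auto
  also have "\<dots> = S" using S0 p by (simp add: powr_powr)
  finally show ?thesis by (simp add: S_def)
qed

lemma Wp_tri:
  fixes m1 m2 m3 :: "'a::metric_space measure"
  assumes sep: "separable_space (euclidean :: 'a topology)"
    and m1: "m1 \<in> Pp p" and m2: "m2 \<in> Pp p" and m3: "m3 \<in> Pp p" and p: "p \<ge> 1"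
  shows "Wp p m1 m3 \<le> Wp p m1 m2 + Wp p m2 m3"
proof (rule field_le_epsilon)
  fix e :: real assume e: "0 < e"
  have "Wp p m1 m3 \<le> (Wp p m1 m2 + e/3) + (Wp p m2 m3 + e/3) + e/3"
    using e by (intro Wp_tri_key[OF sep m1 m2 m3 p]) auto
  then show "Wp p m1 m3 \<le> Wp p m1 m2 + Wp p m2 m3 + e" by simp
qed


theorem theorem5p6:
  fixes p :: real
    and mu nu :: "real \<Rightarrow> 'a::{metric_space, complete_space} measure"
    and tn :: "nat \<Rightarrow> real"
  assumes "separable_space (euclidean :: 'a topology)"
    and "\<not> compact (UNIV :: 'a set)"
    and "locally_compact_space (euclidean :: 'a topology)"
    and "length_space TYPE('a)"
    and "non_branching TYPE('a)"
    and "p > 1"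
    and "unit_ray p mu"
    and "unit_ray p nu"
    and "\<forall>n. tn n > 0"
    and "tn \<longlonglongrightarrow> 0"
    and "\<forall>n. co_ray p (\<lambda>t. nu (t + tn n)) mu \<and>
           (\<forall>l. co_ray p l mu \<and> l 0 = nu (tn n) \<longrightarrow> (\<forall>t\<ge>0. l t = nu (t + tn n)))"
  shows "co_ray p nu mu"
proof -
  have sep: "separable_space (euclidean :: 'a topology)" by fact
  have p1: "p \<ge> 1" using assms(6) by simp
  have nuray: "is_ray p nu" using assms(8) by (simp add: unit_ray_def)
  have nuP: "\<And>t. t \<ge> 0 \<Longrightarrow> nu t \<in> Pp p" using nuray by (simp add: is_ray_def)
  have nuW: "\<And>s t. s \<ge> 0 \<Longrightarrow> t \<ge> 0 \<Longrightarrow> Wp p (nu s) (nu t) = \<bar>s - t\<bar>"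
    using assms(8) by (simp add: unit_ray_def is_ray_def)
  have tri: "\<And>a b c :: 'a measure. a \<in> Pp p \<Longrightarrow> b \<in> Pp p \<Longrightarrow> c \<in> Pp p \<Longrightarrow> Wp p a c \<le> Wp p a b + Wp p b c"
    using Wp_tri[OF sep _ _ _ p1] by blast
  define P where "P m s l0 ln \<longleftrightarrow> filterlim s at_top sequentially \<and> (\<forall>n. l0 n \<in> Pp p) \<and>
      (\<lambda>n. Wp p (l0 n) (nu (0 + tn m))) \<longlonglongrightarrow> 0 \<and>
      (\<forall>n. ln n \<in> Tgeod p (l0 n) (mu (s n))) \<and>
      (\<forall>t\<ge>0. (\<lambda>n. Wp p (ln n t) (nu (t + tn m))) \<longlonglongrightarrow> 0)"
    for m and s :: "nat \<Rightarrow> real" and l0 :: "nat \<Rightarrow> 'a measure" and ln :: "nat \<Rightarrow> real \<Rightarrow> 'a measure"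
  have co: "\<forall>m. \<exists>s. \<exists>l0. \<exists>ln. P m s l0 ln"
  proof
    fix m
    have "co_ray p (\<lambda>t. nu (t + tn m)) mu" using assms(11) by blast
    then show "\<exists>s. \<exists>l0. \<exists>ln. P m s l0 ln" unfolding co_ray_def P_def by blast
  qed
  obtain S where Sx: "\<forall>m. \<exists>l0. \<exists>ln. P m (S m) l0 ln"
    using choice[OF co] by blast
  obtain L0 where Lx: "\<forall>m. \<exists>ln. P m (S m) (L0 m) ln"
    using choice[OF Sx] by blast
  obtain LN where Px: "\<forall>m. P m (S m) (L0 m) (LN m)"
    using choice[OF Lx] by blast
  have HS: "\<And>m. filterlim (S m) at_top sequentially" and
    HP: "\<And>m k. L0 m k \<in> Pp p" and
    H0: "\<And>m. (\<lambda>k. Wp p (L0 m k) (nu (0 + tn m))) \<longlonglongrightarrow> 0" and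
    HT: "\<And>m k. LN m k \<in> Tgeod p (L0 m k) (mu (S m k))" and
    HL: "\<And>m t. t \<ge> 0 \<Longrightarrow> (\<lambda>k. Wp p (LN m k t) (nu (t + tn m))) \<longlonglongrightarrow> 0"
    using Px unfolding P_def by auto
  define e where "e n = 1 / real (Suc n)" for n
  have e0: "e n > 0" for n by (simp add: e_def)
  have elim: "(\<lambda>n. c * e n) \<longlonglongrightarrow> 0" for c
  proof -
    have "(\<lambda>n. c * inverse (real (Suc n))) \<longlonglongrightarrow> c * 0"
      by (intro tendsto_mult tendsto_const LIMSEQ_inverse_real_of_nat)
    then show ?thesis by (simp add: e_def inverse_eq_divide)
  qed
  have "\<exists>m. tn m < e n" for n
  proof -
    have "eventually (\<lambda>m. tn m < e n) sequentially"
      using order_tendstoD(2)[OF assms(10) e0[of n]] .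
    then show ?thesis by (auto simp: eventually_sequentially)
  qed
  then have "\<forall>n. \<exists>m. tn m < e n" by blast
  from choice[OF this] obtain M where M0: "\<forall>n. tn (M n) < e n" by blast
  have M: "\<And>n. tn (M n) < e n" using M0 by blast
  have "\<exists>k. real n \<le> S (M n) k \<and> Wp p (L0 (M n) k) (nu (tn (M n))) < e n \<and>
      (\<forall>j\<in>{..Suc n * Suc n}. Wp p (LN (M n) k (real j / real (Suc n))) (nu (real j / real (Suc n) + tn (M n))) < e n)"
    for n
  proof -
    have E1: "eventually (\<lambda>k. real n \<le> S (M n) k) sequentially"
      using HS[of "M n"] unfolding filterlim_at_top by blast
    have E2: "eventually (\<lambda>k. Wp p (L0 (M n) k) (nu (tn (M n))) < e n) sequentially"
      using order_tendstoD(2)[OF H0[of "M n"] e0[of n]] by simp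
    have E3: "eventually (\<lambda>k. \<forall>j\<in>{..Suc n * Suc n}. Wp p (LN (M n) k (real j / real (Suc n))) (nu (real j / real (Suc n) + tn (M n))) < e n) sequentially"
      by (intro eventually_ball_finite ballI finite_atMost order_tendstoD(2)[OF HL e0]) simp
    have "eventually (\<lambda>k. real n \<le> S (M n) k \<and> Wp p (L0 (M n) k) (nu (tn (M n))) < e n \<and>
      (\<forall>j\<in>{..Suc n * Suc n}. Wp p (LN (M n) k (real j / real (Suc n))) (nu (real j / real (Suc n) + tn (M n))) < e n)) sequentially"
      using E1 E2 E3 by eventually_elim auto
    then obtain N where N: "\<forall>k\<ge>N. real n \<le> S (M n) k \<and> Wp p (L0 (M n) k) (nu (tn (M n))) < e n \<and>
      (\<forall>j\<in>{..Suc n * Suc n}. Wp p (LN (M n) k (real j / real (Suc n))) (nu (real j / real (Suc n) + tn (M n))) < e n)"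
      unfolding eventually_sequentially by blast
    show ?thesis using N[rule_format, OF order_refl] by blast
  qed
  then have "\<forall>n. \<exists>k. real n \<le> S (M n) k \<and> Wp p (L0 (M n) k) (nu (tn (M n))) < e n \<and>
      (\<forall>j\<in>{..Suc n * Suc n}. Wp p (LN (M n) k (real j / real (Suc n))) (nu (real j / real (Suc n) + tn (M n))) < e n)"
    by blast
  from choice[OF this] obtain Kf where Kx: "\<forall>n. real n \<le> S (M n) (Kf n) \<and> Wp p (L0 (M n) (Kf n)) (nu (tn (M n))) < e n \<and>
      (\<forall>j\<in>{..Suc n * Suc n}. Wp p (LN (M n) (Kf n) (real j / real (Suc n))) (nu (real j / real (Suc n) + tn (M n))) < e n)"
    by blast
  have K1: "\<And>n. real n \<le> S (M n) (Kf n)" and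
    K2: "\<And>n. Wp p (L0 (M n) (Kf n)) (nu (tn (M n))) < e n" and
    K3: "\<And>n j. j \<le> Suc n * Suc n \<Longrightarrow> Wp p (LN (M n) (Kf n) (real j / real (Suc n))) (nu (real j / real (Suc n) + tn (M n))) < e n"
    using Kx by auto
  define s where "s n = S (M n) (Kf n)" for n
  define l0 where "l0 n = L0 (M n) (Kf n)" for n
  define g where "g n = LN (M n) (Kf n)" for n
  define Lg where "Lg n = Wp p (l0 n) (mu (s n))" for n
  define ln where "ln n t = (if t \<le> Lg n then g n t else nu t)" for n t
  define \<tau> where "\<tau> n = tn (M n)" for n
  have \<tau>0: "\<tau> n > 0" for n using assms(9) by (simp add: \<tau>_def)
  have \<tau>e: "\<tau> n < e n" for n using M by (simp add: \<tau>_def)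
  have Lg0: "Lg n \<ge> 0" for n by (simp add: Lg_def Wp_nonneg)
  have gT: "g n \<in> Tgeod p (l0 n) (mu (s n))" for n using HT by (simp add: g_def l0_def s_def)
  have gP: "\<And>n t. t \<in> {0..Lg n} \<Longrightarrow> g n t \<in> Pp p"
    using gT unfolding Tgeod_def Lg_def by blast
  have gW: "\<And>n a b. a \<in> {0..Lg n} \<Longrightarrow> b \<in> {0..Lg n} \<Longrightarrow> Wp p (g n a) (g n b) = \<bar>a - b\<bar>"
    using gT unfolding Tgeod_def Lg_def by blast
  have l0P: "l0 n \<in> Pp p" for n using HP by (simp add: l0_def)
  show ?thesis
    unfolding co_ray_def
  proof (intro conjI exI[of _ s] exI[of _ l0] exI[of _ ln])
    show "is_ray p nu" by (rule nuray)
    show "filterlim s at_top sequentially"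
      by (rule filterlim_at_top_mono[OF filterlim_real_sequentially]) (use K1 in \<open>simp add: s_def\<close>)
    show "\<forall>n. l0 n \<in> Pp p" using l0P by blast
    show "(\<lambda>n. Wp p (l0 n) (nu 0)) \<longlonglongrightarrow> 0"
    proof (rule tendsto_sandwich[OF _ _ tendsto_const elim[of 2]])
      show "\<forall>\<^sub>F n in sequentially. 0 \<le> Wp p (l0 n) (nu 0)" by (simp add: Wp_nonneg)
      show "\<forall>\<^sub>F n in sequentially. Wp p (l0 n) (nu 0) \<le> 2 * e n"
      proof (rule always_eventually, rule allI)
        fix n
        have "Wp p (l0 n) (nu 0) \<le> Wp p (l0 n) (nu (\<tau> n)) + Wp p (nu (\<tau> n)) (nu 0)"
          using l0P nuP \<tau>0 by (intro tri) (auto simp: less_imp_le)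
        also have "Wp p (nu (\<tau> n)) (nu 0) = \<tau> n" using nuW[of "\<tau> n" 0] \<tau>0[of n] by simp
        also have "Wp p (l0 n) (nu (\<tau> n)) < e n" using K2 by (simp add: l0_def \<tau>_def)
        finally show "Wp p (l0 n) (nu 0) \<le> 2 * e n" using \<tau>e[of n] by simp
      qed
    qed
    show "\<forall>n. ln n \<in> Tgeod p (l0 n) (mu (s n))"
    proof
      fix n
      have eq: "\<And>t. t \<in> {0..Lg n} \<Longrightarrow> ln n t = g n t" by (simp add: ln_def)
      show "ln n \<in> Tgeod p (l0 n) (mu (s n))"
        using gT Lg0[of n] unfolding Tgeod_def Lg_def[symmetric]
        by (auto simp: eq)
    qed
    show "\<forall>t\<ge>0. (\<lambda>n. Wp p (ln n t) (nu t)) \<longlonglongrightarrow> 0"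
    proof (intro allI impI)
      fix t :: real assume t0: "t \<ge> 0"
      show "(\<lambda>n. Wp p (ln n t) (nu t)) \<longlonglongrightarrow> 0"
      proof (rule tendsto_sandwich[OF _ _ tendsto_const elim[of 4]])
        show "\<forall>\<^sub>F n in sequentially. 0 \<le> Wp p (ln n t) (nu t)" by (simp add: Wp_nonneg)
        have ev: "\<forall>\<^sub>F n in sequentially. t \<le> real (Suc n)"
        proof -
          obtain N :: nat where "t \<le> real N" using real_arch_simple by blast
          then show ?thesis unfolding eventually_sequentially
            by (intro exI[of _ N]) auto
        qed
        show "\<forall>\<^sub>F n in sequentially. Wp p (ln n t) (nu t) \<le> 4 * e n"
          using ev
        proof eventually_elim
          case (elim n)
          show ?case
          proof (cases "t \<le> Lg n")
            case False
            then have "ln n t = nu t" by (simp add: ln_def)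
            then show ?thesis using nuW[OF t0 t0] e0[of n] by simp
          next
            case True
            then have lnt: "ln n t = g n t" by (simp add: ln_def)
            define N1 where "N1 = real (Suc n)"
            have N1: "N1 > 0" "N1 \<ge> 1" by (auto simp: N1_def)
            have eN: "e n = 1 / N1" by (simp add: e_def N1_def)
            define j where "j = nat \<lfloor>t * N1\<rfloor>"
            have fl0: "\<lfloor>t * N1\<rfloor> \<ge> 0" using t0 N1 by simp
            have rj: "real j = of_int \<lfloor>t * N1\<rfloor>" using fl0 by (simp add: j_def)
            have j1: "real j \<le> t * N1" using rj by linarith
            have j2: "t * N1 < real j + 1" using rj by linarith
            define q where "q = real j / N1"
            have q0: "q \<ge> 0" by (simp add: q_def N1(1) less_imp_le)
            have qt: "q \<le> t" using j1 N1 by (simp add: q_def field_simps)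
            have tq: "t - q < e n"
            proof -
              have "t * N1 - real j < 1" using j2 by simp
              then have "(t * N1 - real j) / N1 < 1 / N1" using N1 by (simp add: divide_strict_right_mono)
              moreover have "t - q = (t * N1 - real j) / N1" using N1 by (simp add: q_def field_simps)
              ultimately show ?thesis by (simp add: eN)
            qed
            have jb: "j \<le> Suc n * Suc n"
            proof -
              have "t * N1 \<le> N1 * N1" unfolding N1_def using elim by (intro mult_right_mono) auto
              then have "real j \<le> N1 * N1" using j1 by linarith
              then have "real j \<le> real (Suc n * Suc n)" unfolding N1_def by (simp only: of_nat_mult)
              then show ?thesis by (simp only: of_nat_le_iff)
            qed
            have qL: "q \<in> {0..Lg n}" using q0 qt True by auto
            have tL: "t \<in> {0..Lg n}" using t0 True by auto
            have "Wp p (g n t) (nu t) \<le> Wp p (g n t) (g n q) + Wp p (g n q) (nu t)"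
              using gP[OF tL] gP[OF qL] nuP[OF t0] by (rule tri)
            also have "Wp p (g n q) (nu t) \<le> Wp p (g n q) (nu (q + \<tau> n)) + Wp p (nu (q + \<tau> n)) (nu t)"
              using gP[OF qL] nuP[of "q + \<tau> n"] nuP[OF t0] q0 \<tau>0[of n] by (intro tri) auto
            also have "Wp p (g n t) (g n q) = t - q" using gW[OF tL qL] qt by simp
            also have "Wp p (nu (q + \<tau> n)) (nu t) = \<bar>q + \<tau> n - t\<bar>"
              using nuW[of "q + \<tau> n" t] q0 \<tau>0[of n] t0 by simp
            also have "Wp p (g n q) (nu (q + \<tau> n)) < e n"
              using K3[OF jb] by (simp add: g_def q_def N1_def \<tau>_def)
            finally have "Wp p (g n t) (nu t) < t - q + (e n + \<bar>q + \<tau> n - t\<bar>)" by simp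
            moreover have "\<bar>q + \<tau> n - t\<bar> \<le> (t - q) + \<tau> n" using qt \<tau>0[of n] by simp
            ultimately show ?thesis using tq \<tau>e[of n] lnt by simp
          qed
        qed
      qed
    qed
  qed
qed

end
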